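(* Let $X$ be a set, $F:\mathcal{P}(X)\to\mathcal{P}(X)$ an interior operator, and $\kappa$ a cardinal. If the complete sup-lattice $(\mathbf{Fix}(F),\subseteq,\bigcup)$ has a basis indexed by a set of cardinality $\kappa$, then $F$ has a resolution whose interpolant $Y$ has cardinality $\kappa$, i.e. there exist a set $Y$ with $|Y|=\kappa$ and a relation $r\subseteq X\times Y$ such that $F=\langle r\rangle\circ[r^{\sim}]$.
   Context: An interior operator on $\mathcal{P}(X)$ is a map $F$ that is monotonic, contractive ($F(U)\subseteq U$), and satisfies $F(U)\subseteq F(F(U))$; $\mathbf{Fix}(F)=\{U\subseteq X\mid F(U)=U\}$, which is closed under arbitrary unions. A basis of a complete sup-lattice $(L,\leq,\bigvee)$ is a family $(x_i)_{i\in I}$ of elements of $L$ such that for every $y\in L$, $y=\bigvee\{x_i\mid x_i\leq y\}$; it is indexed by $I$. For $r\subseteq X\times Y$, $r^{\sim}=\{(y,x)\mid (x,y)\in r\}$. For $t\subseteq A\times B$, $\langle t\rangle,[t]:\mathcal{P}(B)\to\mathcal{P}(A)$ are $\langle t\rangle(V)=\{a\mid \exists b,\ (a,b)\in t\wedge b\in V\}$ and $[t](V)=\{a\mid \forall b,\ (a,b)\in t\Rightarrow b\in V\}$. *)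

theory Defs
  imports Main "HOL-Library.Equipollence"
begin

text \<open>Interior operator on the powerset of X (values of F outside Pow X are irrelevant).\<close>
definition interior_operator :: "'a set \<Rightarrow> ('a set \<Rightarrow> 'a set) \<Rightarrow> bool" where
  "interior_operator X F \<longleftrightarrow>
     (\<forall>U\<in>Pow X. F U \<subseteq> X) \<and>
     (\<forall>U V. U \<subseteq> V \<and> V \<subseteq> X \<longrightarrow> F U \<subseteq> F V) \<and>
     (\<forall>U\<in>Pow X. F U \<subseteq> U) \<and>
     (\<forall>U\<in>Pow X. F U \<subseteq> F (F U))"

definition Fix :: "'a set \<Rightarrow> ('a set \<Rightarrow> 'a set) \<Rightarrow> 'a set set" where
  "Fix X F = {U. U \<subseteq> X \<and> F U = U}"

definition is_basis :: "'a set set \<Rightarrow> 'i set \<Rightarrow> ('i \<Rightarrow> 'a set) \<Rightarrow> bool" where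
  "is_basis L I b \<longleftrightarrow> (\<forall>i\<in>I. b i \<in> L) \<and>
     (\<forall>y\<in>L. y = \<Union>{b i | i. i \<in> I \<and> b i \<subseteq> y})"

definition diam :: "'a set \<Rightarrow> ('a \<times> 'b) set \<Rightarrow> 'b set \<Rightarrow> 'a set" where
  "diam A t V = {a\<in>A. \<exists>b. (a, b) \<in> t \<and> b \<in> V}"

definition box :: "'a set \<Rightarrow> ('a \<times> 'b) set \<Rightarrow> 'b set \<Rightarrow> 'a set" where
  "box A t V = {a\<in>A. \<forall>b. (a, b) \<in> t \<longrightarrow> b \<in> V}"

end

theory Submission
  imports Defs
begin

theorem corollary2:
  fixes X :: "'a set" and F :: "'a set \<Rightarrow> 'a set"
    and I :: "'i set" and b :: "'i \<Rightarrow> 'a set"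
  assumes "interior_operator X F"
    and "is_basis (Fix X F) I b"
  shows "\<exists>(Y :: 'i set) (r :: ('a \<times> 'i) set).
           Y \<approx> I \<and> r \<subseteq> X \<times> Y \<and>
           (\<forall>U. U \<subseteq> X \<longrightarrow> F U = diam X r (box Y (r\<inverse>) U))"
proof -
  have io1: "\<And>U. U \<subseteq> X \<Longrightarrow> F U \<subseteq> X"
   and mono: "\<And>U V. U \<subseteq> V \<Longrightarrow> V \<subseteq> X \<Longrightarrow> F U \<subseteq> F V"
   and contr: "\<And>U. U \<subseteq> X \<Longrightarrow> F U \<subseteq> U"
   and idem: "\<And>U. U \<subseteq> X \<Longrightarrow> F U \<subseteq> F (F U)"
    using assms(1) unfolding interior_operator_def by auto
  have bL: "\<forall>i\<in>I. b i \<in> Fix X F"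
   and bas0: "\<forall>y\<in>Fix X F. y = \<Union>{b i | i. i \<in> I \<and> b i \<subseteq> y}"
    using assms(2) unfolding is_basis_def by auto
  have bF: "\<And>i. i \<in> I \<Longrightarrow> b i \<subseteq> X \<and> F (b i) = b i"
    using bL unfolding Fix_def by simp
  define r where "r = {(x,i). i \<in> I \<and> x \<in> b i}"
  have "r \<subseteq> X \<times> I" using bF unfolding r_def by auto
  moreover have "F U = diam X r (box I (r\<inverse>) U)" if U: "U \<subseteq> X" for U
  proof -
    have FUX: "F U \<subseteq> U" "F U \<subseteq> X" using contr io1 U by auto
    have "F (F U) \<subseteq> F U" using contr FUX by simp
    moreover have "F U \<subseteq> F (F U)" using idem U by simp
    ultimately have "F (F U) = F U" by (rule antisym)
    with FUX have inF: "F U \<in> Fix X F" unfolding Fix_def by simp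
    have key: "\<And>i. i \<in> I \<Longrightarrow> b i \<subseteq> U \<longleftrightarrow> b i \<subseteq> F U"
    proof -
      fix i assume i: "i \<in> I"
      show "b i \<subseteq> U \<longleftrightarrow> b i \<subseteq> F U"
      proof
        assume "b i \<subseteq> U"
        then have "F (b i) \<subseteq> F U" using mono U by simp
        then show "b i \<subseteq> F U" using bF i by simp
      next
        assume "b i \<subseteq> F U" then show "b i \<subseteq> U" using FUX by simp
      qed
    qed
    have "F U = \<Union>{b i | i. i \<in> I \<and> b i \<subseteq> F U}" using bas0 inF by simp
    also have "{b i | i. i \<in> I \<and> b i \<subseteq> F U} = {b i | i. i \<in> I \<and> b i \<subseteq> U}"
      using key by (auto simp del: Collect_ex_eq)
    also have "\<Union>{b i | i. i \<in> I \<and> b i \<subseteq> U} = diam X r (box I (r\<inverse>) U)"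
    proof (rule set_eqI)
      fix x
      show "x \<in> \<Union>{b i | i. i \<in> I \<and> b i \<subseteq> U} \<longleftrightarrow> x \<in> diam X r (box I (r\<inverse>) U)"
      proof
        assume "x \<in> \<Union>{b i | i. i \<in> I \<and> b i \<subseteq> U}"
        then obtain i where i: "i \<in> I" "b i \<subseteq> U" "x \<in> b i" by blast
        have "i \<in> box I (r\<inverse>) U" unfolding box_def r_def using i by auto
        moreover have "x \<in> X" using bF i by blast
        moreover have "(x, i) \<in> r" unfolding r_def using i by simp
        ultimately show "x \<in> diam X r (box I (r\<inverse>) U)" unfolding diam_def by blast
      next
        assume "x \<in> diam X r (box I (r\<inverse>) U)"
        then obtain i where i: "(x, i) \<in> r" "i \<in> box I (r\<inverse>) U" unfolding diam_def by blast
        have iI: "i \<in> I" "x \<in> b i" using i(1) unfolding r_def by auto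
        have "b i \<subseteq> U" using i(2) unfolding box_def r_def by auto
        then show "x \<in> \<Union>{b i | i. i \<in> I \<and> b i \<subseteq> U}" using iI by blast
      qed
    qed
    finally show ?thesis .
  qed
  ultimately show ?thesis by (intro exI[of _ I] exI[of _ r] conjI eqpoll_refl allI impI) blast+
qed

end
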